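(* Let $I$ be an ideal of a ring $R$. The following are equivalent: (1) $R$ is uniquely weakly $I$-clean; (2) $R/I$ is semi Boolean and idempotents can be lifted uniquely weakly modulo $I$; (3) $R/I$ is semi Boolean, idempotents can be lifted weakly modulo $I$, $R$ is abelian, and $I$ is idempotent free; (4) for each $a\in R$ there exists a central idempotent $e\in R$ such that $a-e\in I$ or $a+e\in I$, and $I$ is idempotent free.
   Context: All rings are associative with identity; $Idem(R)$ is the set of idempotents. $R$ is uniquely weakly $I$-clean if for every $x\in R$ there exists a unique $e\in Idem(R)$ with $x-e\in I$ or $x+e\in I$. A ring $A$ is semi Boolean if for every $x\in A$, $x^2=x$ or $x^2=-x$. Idempotents can be lifted weakly modulo $I$ if for every $x\in R$ with $x^2-x\in I$ there is $e\in Idem(R)$ with $x-e\in I$ or $x+e\in I$; lifted uniquely weakly if such $e$ is moreover unique. An ideal is idempotent free if the only idempotent it contains is $0$. $R$ is abelian if all idempotents are central. *)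

theory Defs
  imports "HOL-Algebra.QuotRing"
begin

definition Idems :: "('a, 'b) ring_scheme \<Rightarrow> 'a set" where
  "Idems R = {e \<in> carrier R. e \<otimes>\<^bsub>R\<^esub> e = e}"

definition uniquely_weakly_clean :: "('a, 'b) ring_scheme \<Rightarrow> 'a set \<Rightarrow> bool" where
  "uniquely_weakly_clean R I \<longleftrightarrow>
     (\<forall>x \<in> carrier R. \<exists>!e. e \<in> Idems R \<and> (x \<ominus>\<^bsub>R\<^esub> e \<in> I \<or> x \<oplus>\<^bsub>R\<^esub> e \<in> I))"

definition semi_boolean :: "('a, 'b) ring_scheme \<Rightarrow> bool" where
  "semi_boolean A \<longleftrightarrow>
     (\<forall>x \<in> carrier A. x \<otimes>\<^bsub>A\<^esub> x = x \<or> x \<otimes>\<^bsub>A\<^esub> x = \<ominus>\<^bsub>A\<^esub> x)"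

definition idem_lift_weakly :: "('a, 'b) ring_scheme \<Rightarrow> 'a set \<Rightarrow> bool" where
  "idem_lift_weakly R I \<longleftrightarrow>
     (\<forall>x \<in> carrier R. x \<otimes>\<^bsub>R\<^esub> x \<ominus>\<^bsub>R\<^esub> x \<in> I \<longrightarrow>
        (\<exists>e. e \<in> Idems R \<and> (x \<ominus>\<^bsub>R\<^esub> e \<in> I \<or> x \<oplus>\<^bsub>R\<^esub> e \<in> I)))"

definition idem_lift_uniquely_weakly :: "('a, 'b) ring_scheme \<Rightarrow> 'a set \<Rightarrow> bool" where
  "idem_lift_uniquely_weakly R I \<longleftrightarrow>
     (\<forall>x \<in> carrier R. x \<otimes>\<^bsub>R\<^esub> x \<ominus>\<^bsub>R\<^esub> x \<in> I \<longrightarrow>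
        (\<exists>!e. e \<in> Idems R \<and> (x \<ominus>\<^bsub>R\<^esub> e \<in> I \<or> x \<oplus>\<^bsub>R\<^esub> e \<in> I)))"

definition idempotent_free :: "('a, 'b) ring_scheme \<Rightarrow> 'a set \<Rightarrow> bool" where
  "idempotent_free R I \<longleftrightarrow> (\<forall>e \<in> I. e \<otimes>\<^bsub>R\<^esub> e = e \<longrightarrow> e = \<zero>\<^bsub>R\<^esub>)"

definition central :: "('a, 'b) ring_scheme \<Rightarrow> 'a \<Rightarrow> bool" where
  "central R e \<longleftrightarrow> (\<forall>x \<in> carrier R. e \<otimes>\<^bsub>R\<^esub> x = x \<otimes>\<^bsub>R\<^esub> e)"

definition abelian_ring :: "('a, 'b) ring_scheme \<Rightarrow> bool" where
  "abelian_ring R \<longleftrightarrow> (\<forall>e \<in> Idems R. central R e)"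

end

theory Submission imports Defs "HOL-Algebra.Algebra" begin

context ring begin

lemma idemL: "\<lbrakk>e \<in> carrier R; e \<otimes> e = e; x \<in> carrier R\<rbrakk> \<Longrightarrow> e \<otimes> (e \<otimes> x) = e \<otimes> x"
  by (metis m_assoc)

lemma sq_idem:
  assumes e: "e \<in> carrier R" "e \<otimes> e = e" and a: "a \<in> carrier R" "a \<otimes> a = \<zero>"
    and s: "e \<otimes> a \<oplus> a \<otimes> e = a"
  shows "(e \<oplus> a) \<otimes> (e \<oplus> a) = e \<oplus> a"
proof -
  have "(e \<oplus> a) \<otimes> (e \<oplus> a) = e \<otimes> e \<oplus> (e \<otimes> a \<oplus> a \<otimes> e) \<oplus> a \<otimes> a"
    using e a by (simp add: l_distr r_distr a_ac)
  also have "\<dots> = e \<oplus> a" using e a s by simp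
  finally show ?thesis .
qed

lemma abel_aux:
  assumes e: "e \<in> carrier R" "e \<otimes> e = e" and I: "ideal I R"
    and uniq: "\<And>f. f \<in> carrier R \<Longrightarrow> f \<otimes> f = f \<Longrightarrow> e \<ominus> f \<in> I \<Longrightarrow> f = e"
    and nil: "\<And>a. a \<in> carrier R \<Longrightarrow> a \<otimes> a = \<zero> \<Longrightarrow> a \<in> I"
  shows "central R e"
  unfolding central_def
proof
  fix r assume r: "r \<in> carrier R"
  interpret I: ideal I R by (rule I)
  define a where "a = e \<otimes> r \<ominus> e \<otimes> (r \<otimes> e)"
  have ac: "a \<in> carrier R" using e r by (simp add: a_def)
  have ea: "e \<otimes> a = a" using e r by (simp add: a_def a_minus_def r_distr r_minus idemL)
  have ae: "a \<otimes> e = \<zero>" using e r by (simp add: a_def a_minus_def l_distr l_minus m_assoc r_neg)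
  have aa: "a \<otimes> a = \<zero>"
  proof -
    have "a \<otimes> a = a \<otimes> (e \<otimes> r) \<ominus> a \<otimes> (e \<otimes> (r \<otimes> e))"
      using e r ac by (simp add: a_def a_minus_def r_distr r_minus)
    also have "\<dots> = \<zero>" using ae e r ac by (simp add: m_assoc[symmetric])
    finally show ?thesis .
  qed
  have aI: "a \<in> I" using nil ac aa by blast
  have fid: "(e \<oplus> a) \<otimes> (e \<oplus> a) = e \<oplus> a" using sq_idem e ac aa ea ae by simp
  have "e \<ominus> (e \<oplus> a) = \<ominus> a" using e ac by (simp add: a_minus_def minus_add a_assoc[symmetric] r_neg)
  hence "e \<ominus> (e \<oplus> a) \<in> I" using aI by (simp add: I.a_inv_closed)
  hence "e \<oplus> a = e" using uniq fid e ac by simp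
  hence a0: "a = \<zero>" using e ac by (metis add.l_cancel_one' add.l_cancel_one)
  hence 1: "e \<otimes> r = e \<otimes> (r \<otimes> e)" using e r unfolding a_def by (simp add: r_right_minus_eq)
  define b where "b = r \<otimes> e \<ominus> e \<otimes> (r \<otimes> e)"
  have bc: "b \<in> carrier R" using e r by (simp add: b_def)
  have eb: "e \<otimes> b = \<zero>" using e r by (simp add: b_def a_minus_def r_distr r_minus idemL r_neg)
  have be: "b \<otimes> e = b" using e r by (simp add: b_def a_minus_def l_distr l_minus m_assoc)
  have bb: "b \<otimes> b = \<zero>"
  proof -
    have "b \<otimes> b = (r \<otimes> e) \<otimes> b \<ominus> e \<otimes> (r \<otimes> e) \<otimes> b"
      using e r bc by (simp add: b_def a_minus_def l_distr l_minus)
    also have "\<dots> = \<zero>" using eb e r bc by (simp add: m_assoc)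
    finally show ?thesis .
  qed
  have bI: "b \<in> I" using nil bc bb by blast
  have fid: "(e \<oplus> b) \<otimes> (e \<oplus> b) = e \<oplus> b" using sq_idem e bc bb eb be by simp
  have "e \<ominus> (e \<oplus> b) = \<ominus> b" using e bc by (simp add: a_minus_def minus_add a_assoc[symmetric] r_neg)
  hence "e \<ominus> (e \<oplus> b) \<in> I" using bI by (simp add: I.a_inv_closed)
  hence "e \<oplus> b = e" using uniq fid e bc by simp
  hence b0: "b = \<zero>" using e bc by (metis add.l_cancel_one' add.l_cancel_one)
  hence 2: "r \<otimes> e = e \<otimes> (r \<otimes> e)" using e r unfolding b_def by (simp add: r_right_minus_eq)
  show "e \<otimes> r = r \<otimes> e" using 1 2 by simp
qed


lemma uniq_aux:
  assumes e: "e \<in> carrier R" "e \<otimes> e = e" and g: "g \<in> carrier R" "g \<otimes> g = g"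
    and gc: "central R g" and I: "ideal I R" and free: "idempotent_free R I"
    and s: "e \<oplus> g \<in> I \<or> e \<ominus> g \<in> I"
  shows "e = g"
proof -
  interpret I: ideal I R by (rule I)
  have ge: "g \<otimes> e = e \<otimes> g" using gc e unfolding central_def by simp
  have f1: "e \<otimes> (g \<otimes> e) = e \<otimes> g" using ge e g by (simp add: idemL)
  have f2: "e \<otimes> (g \<otimes> (e \<otimes> g)) = e \<otimes> g" using ge e g f1 by (metis m_assoc m_closed)
  have f3: "g \<otimes> (e \<otimes> g) = e \<otimes> g" using ge e g by (metis m_assoc)
  have f4: "e \<otimes> (g \<otimes> g) = e \<otimes> g" using g by simp
  define p where "p = e \<ominus> e \<otimes> g"
  have pc: "p \<in> carrier R" using e g by (simp add: p_def)
  have pI: "p \<in> I"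
  proof (cases "e \<oplus> g \<in> I")
    case True
    have "(e \<oplus> g) \<otimes> (\<one> \<ominus> g) = p" using e g
      by (simp add: p_def a_minus_def l_distr r_distr r_minus l_minus a_ac r_neg r_neg1 r_neg2 minus_add)
    then show ?thesis using True g by (metis I.I_r_closed minus_closed one_closed)
  next
    case False
    hence F: "e \<ominus> g \<in> I" using s by simp
    have "(e \<ominus> g) \<otimes> (\<one> \<ominus> g) = p" using e g
      by (simp add: p_def a_minus_def l_distr r_distr r_minus l_minus a_ac r_neg r_neg1 r_neg2 minus_add minus_minus)
    then show ?thesis using F g by (metis I.I_r_closed minus_closed one_closed)
  qed
  have "p \<otimes> p = p" using e g
    by (simp add: p_def a_minus_def l_distr r_distr r_minus l_minus m_assoc f1 f2 idemL a_ac r_neg r_neg1 r_neg2 minus_add minus_minus)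
  hence "p = \<zero>" using free pI unfolding idempotent_free_def by blast
  hence 1: "e = e \<otimes> g" using e g unfolding p_def by (simp add: r_right_minus_eq)
  define q where "q = g \<ominus> e \<otimes> g"
  have qI: "q \<in> I"
  proof (cases "e \<oplus> g \<in> I")
    case True
    have "(\<one> \<ominus> e) \<otimes> (e \<oplus> g) = q" using e g
      by (simp add: q_def a_minus_def l_distr r_distr r_minus l_minus a_ac r_neg r_neg1 r_neg2 minus_add idemL m_assoc)
    then show ?thesis using True e by (metis I.I_l_closed minus_closed one_closed)
  next
    case False
    hence F: "e \<ominus> g \<in> I" using s by simp
    have "\<ominus> ((\<one> \<ominus> e) \<otimes> (e \<ominus> g)) = q" using e g
      by (simp add: q_def a_minus_def l_distr r_distr r_minus l_minus a_ac r_neg r_neg1 r_neg2 minus_minus minus_add idemL m_assoc)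
    then show ?thesis using F e by (metis I.I_l_closed minus_closed one_closed I.a_inv_closed)
  qed
  have "q \<otimes> q = q" using e g
    by (simp add: q_def a_minus_def l_distr r_distr r_minus l_minus m_assoc f2 f3 f4 idemL a_ac r_neg r_neg1 r_neg2 minus_add minus_minus)
  hence "q = \<zero>" using free qI unfolding idempotent_free_def by blast
  hence 2: "g = e \<otimes> g" using e g unfolding q_def by (simp add: r_right_minus_eq)
  show ?thesis using 1 2 by simp
qed


end

lemma quot_carrier:
  assumes "ring R" "ideal I R"
  shows "carrier (R Quot I) = (\<lambda>x. I +>\<^bsub>R\<^esub> x) ` carrier R"
  by (auto simp: FactRing_def A_RCOSETS_def RCOSETS_def a_r_coset_def)

lemma quot_zero_iff:
  assumes "ring R" "ideal I R" "x \<in> carrier R"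
  shows "(I +>\<^bsub>R\<^esub> x = \<zero>\<^bsub>R Quot I\<^esub>) \<longleftrightarrow> x \<in> I"
  using assms ideal.rcos_const_imp_mem[OF assms(2)] ring.a_rcos_zero[OF assms(1,2)]
  by (auto simp: FactRing_def)

theorem mainTheorem10:
  fixes R (structure) and I :: "'a set"
  assumes "ring R" and "ideal I R"
  shows "(uniquely_weakly_clean R I
          \<longleftrightarrow> semi_boolean (R Quot I) \<and> idem_lift_uniquely_weakly R I)
       \<and> (semi_boolean (R Quot I) \<and> idem_lift_uniquely_weakly R I
          \<longleftrightarrow> semi_boolean (R Quot I) \<and> idem_lift_weakly R I \<and> abelian_ring R
              \<and> idempotent_free R I)
       \<and> (semi_boolean (R Quot I) \<and> idem_lift_weakly R I \<and> abelian_ring R \<and> idempotent_free R I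
          \<longleftrightarrow> (\<forall>a \<in> carrier R. \<exists>e \<in> Idems R. central R e \<and> (a \<ominus> e \<in> I \<or> a \<oplus> e \<in> I))
              \<and> idempotent_free R I)"
proof -
  interpret ring R by (rule assms(1))
  interpret I: ideal I R by (rule assms(2))
  have zI: "\<zero> \<in> I" by (rule additive_subgroup.zero_closed[OF I.additive_subgroup_axioms])
  have mm: "\<And>x. x \<in> carrier R \<Longrightarrow> x \<ominus> x = \<zero>" by (simp add: a_minus_def r_neg)
  define Q where "Q = R Quot I"
  define h where "h = (\<lambda>x. I +> x)"
  interpret Q: ring Q unfolding Q_def by (rule I.quotient_is_ring)
  interpret H: ring_hom_ring R Q h unfolding Q_def h_def by (rule I.rcos_ring_hom_ring)
  have Qc: "carrier Q = h ` carrier R" unfolding Q_def h_def using quot_carrier assms by blast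
  have Z: "\<And>x. x \<in> carrier R \<Longrightarrow> h x = \<zero>\<^bsub>Q\<^esub> \<longleftrightarrow> x \<in> I"
    unfolding Q_def h_def by (rule quot_zero_iff[OF assms])
  have C1: "\<And>x y. x \<in> carrier R \<Longrightarrow> y \<in> carrier R \<Longrightarrow> x \<ominus> y \<in> I \<longleftrightarrow> h x = h y"
  proof -
    fix x y assume xy: "x \<in> carrier R" "y \<in> carrier R"
    have "h (x \<ominus> y) = h x \<ominus>\<^bsub>Q\<^esub> h y" using xy by (simp add: a_minus_def)
    then show "x \<ominus> y \<in> I \<longleftrightarrow> h x = h y" using Z[of "x \<ominus> y"] xy by simp
  qed
  have C2: "\<And>x y. x \<in> carrier R \<Longrightarrow> y \<in> carrier R \<Longrightarrow> x \<oplus> y \<in> I \<longleftrightarrow> h x = \<ominus>\<^bsub>Q\<^esub> h y"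
  proof -
    fix x y assume xy: "x \<in> carrier R" "y \<in> carrier R"
    have "x \<oplus> y = x \<ominus> \<ominus> y" using xy by (simp add: a_minus_def)
    then show "x \<oplus> y \<in> I \<longleftrightarrow> h x = \<ominus>\<^bsub>Q\<^esub> h y" using C1[of x "\<ominus> y"] xy by simp
  qed
  have W: "\<And>x e. x \<in> carrier R \<Longrightarrow> e \<in> carrier R \<Longrightarrow>
      (x \<ominus> e \<in> I \<or> x \<oplus> e \<in> I) \<longleftrightarrow> (h x = h e \<or> h x = \<ominus>\<^bsub>Q\<^esub> h e)"
    using C1 C2 by blast
  have SQ: "\<And>x. x \<in> carrier R \<Longrightarrow> x \<otimes> x \<ominus> x \<in> I \<longleftrightarrow> h x \<otimes>\<^bsub>Q\<^esub> h x = h x"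
    using C1 by simp
  have SB: "semi_boolean Q \<longleftrightarrow> (\<forall>x \<in> carrier R. h x \<otimes>\<^bsub>Q\<^esub> h x = h x \<or> h x \<otimes>\<^bsub>Q\<^esub> h x = \<ominus>\<^bsub>Q\<^esub> h x)"
    unfolding semi_boolean_def Qc by blast
  have Id: "\<And>e. e \<in> Idems R \<longleftrightarrow> e \<in> carrier R \<and> e \<otimes> e = e" by (simp add: Idems_def)
  let ?P1 = "uniquely_weakly_clean R I"
  let ?P2 = "semi_boolean (R Quot I) \<and> idem_lift_uniquely_weakly R I"
  let ?P3 = "semi_boolean (R Quot I) \<and> idem_lift_weakly R I \<and> abelian_ring R \<and> idempotent_free R I"
  let ?P4 = "(\<forall>a \<in> carrier R. \<exists>e \<in> Idems R. central R e \<and> (a \<ominus> e \<in> I \<or> a \<oplus> e \<in> I))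
              \<and> idempotent_free R I"
  have 12: "?P1 \<Longrightarrow> ?P2"
  proof -
    assume P1: ?P1
    have "semi_boolean Q" unfolding SB
    proof
      fix x assume x: "x \<in> carrier R"
      then obtain e where e: "e \<in> carrier R" "e \<otimes> e = e" "x \<ominus> e \<in> I \<or> x \<oplus> e \<in> I"
        using P1 unfolding uniquely_weakly_clean_def Id by blast
      have EE: "h e \<otimes>\<^bsub>Q\<^esub> h e = h e" using e by (metis H.hom_mult)
      from W[OF x e(1)] e(3) have "h x = h e \<or> h x = \<ominus>\<^bsub>Q\<^esub> h e" by blast
      then show "h x \<otimes>\<^bsub>Q\<^esub> h x = h x \<or> h x \<otimes>\<^bsub>Q\<^esub> h x = \<ominus>\<^bsub>Q\<^esub> h x"
        using EE e by (auto simp: Q.l_minus Q.r_minus)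
    qed
    moreover have "idem_lift_uniquely_weakly R I"
      using P1 unfolding uniquely_weakly_clean_def idem_lift_uniquely_weakly_def by blast
    ultimately show ?P2 unfolding Q_def by blast
  qed
  have 23: "?P2 \<Longrightarrow> ?P3"
  proof -
    assume P2: ?P2
    hence sb: "\<forall>x \<in> carrier R. h x \<otimes>\<^bsub>Q\<^esub> h x = h x \<or> h x \<otimes>\<^bsub>Q\<^esub> h x = \<ominus>\<^bsub>Q\<^esub> h x"
      using SB Q_def by blast
    have U: "\<And>x. x \<in> carrier R \<Longrightarrow> x \<otimes> x \<ominus> x \<in> I \<Longrightarrow>
        (\<exists>!e. e \<in> Idems R \<and> (x \<ominus> e \<in> I \<or> x \<oplus> e \<in> I))"
      using P2 unfolding idem_lift_uniquely_weakly_def by blast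
    have lw: "idem_lift_weakly R I"
      using P2 unfolding idem_lift_uniquely_weakly_def idem_lift_weakly_def by blast
    have free: "idempotent_free R I" unfolding idempotent_free_def
    proof (intro ballI impI)
      fix e assume eI: "e \<in> I" and ee: "e \<otimes> e = e"
      have ec: "e \<in> carrier R" using eI I.Icarr by blast
      have "\<zero> \<otimes> \<zero> \<ominus> \<zero> \<in> I" by (simp add: zI mm)
      from U[OF zero_closed this] have u: "\<exists>!f. f \<in> Idems R \<and> (\<zero> \<ominus> f \<in> I \<or> \<zero> \<oplus> f \<in> I)" .
      have "\<zero> \<in> Idems R \<and> (\<zero> \<ominus> \<zero> \<in> I \<or> \<zero> \<oplus> \<zero> \<in> I)"
        using Id by (simp add: zI mm)
      moreover have "e \<in> Idems R \<and> (\<zero> \<ominus> e \<in> I \<or> \<zero> \<oplus> e \<in> I)"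
        using Id ec ee eI by simp
      ultimately show "e = \<zero>" using u by blast
    qed
    have ab: "abelian_ring R" unfolding abelian_ring_def
    proof
      fix e assume "e \<in> Idems R"
      hence e: "e \<in> carrier R" "e \<otimes> e = e" using Id by auto
      have ein: "e \<otimes> e \<ominus> e \<in> I" using e by (simp add: r_right_minus_eq zI mm)
      show "central R e"
      proof (rule abel_aux[OF e assms(2)])
        fix f assume f: "f \<in> carrier R" "f \<otimes> f = f" "e \<ominus> f \<in> I"
        have "e \<in> Idems R \<and> (e \<ominus> e \<in> I \<or> e \<oplus> e \<in> I)"
          using e Id by (simp add: r_right_minus_eq zI mm)
        moreover have "f \<in> Idems R \<and> (e \<ominus> f \<in> I \<or> e \<oplus> f \<in> I)" using f Id by simp
        ultimately show "f = e" using U[OF e(1) ein] by blast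
      next
        fix a assume a: "a \<in> carrier R" "a \<otimes> a = \<zero>"
        have A: "h a \<otimes>\<^bsub>Q\<^esub> h a = \<zero>\<^bsub>Q\<^esub>" using a by (metis H.hom_mult H.hom_zero)
        have "h a = \<zero>\<^bsub>Q\<^esub>" using sb a(1) A by (metis H.hom_closed Q.minus_minus Q.minus_zero)
        then show "a \<in> I" using Z a by blast
      qed
    qed
    show ?P3 using P2 lw ab free by blast
  qed
  have 34: "?P3 \<Longrightarrow> ?P4"
  proof -
    assume P3: ?P3
    hence sb: "\<forall>x \<in> carrier R. h x \<otimes>\<^bsub>Q\<^esub> h x = h x \<or> h x \<otimes>\<^bsub>Q\<^esub> h x = \<ominus>\<^bsub>Q\<^esub> h x"
      using SB Q_def by blast
    have L: "\<And>x. x \<in> carrier R \<Longrightarrow> h x \<otimes>\<^bsub>Q\<^esub> h x = h x \<Longrightarrow>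
        \<exists>e. e \<in> Idems R \<and> (h x = h e \<or> h x = \<ominus>\<^bsub>Q\<^esub> h e)"
    proof -
      fix x assume x: "x \<in> carrier R" "h x \<otimes>\<^bsub>Q\<^esub> h x = h x"
      then obtain e where "e \<in> Idems R" "x \<ominus> e \<in> I \<or> x \<oplus> e \<in> I"
        using P3 SQ unfolding idem_lift_weakly_def by blast
      then show "\<exists>e. e \<in> Idems R \<and> (h x = h e \<or> h x = \<ominus>\<^bsub>Q\<^esub> h e)" using W x Id by blast
    qed
    have "\<forall>a \<in> carrier R. \<exists>e \<in> Idems R. central R e \<and> (a \<ominus> e \<in> I \<or> a \<oplus> e \<in> I)"
    proof
      fix a assume a: "a \<in> carrier R"
      have "\<exists>e. e \<in> Idems R \<and> (h a = h e \<or> h a = \<ominus>\<^bsub>Q\<^esub> h e)"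
      proof (cases "h a \<otimes>\<^bsub>Q\<^esub> h a = h a")
        case True then show ?thesis using L a by blast
      next
        case False
        hence m: "h a \<otimes>\<^bsub>Q\<^esub> h a = \<ominus>\<^bsub>Q\<^esub> h a" using sb a by blast
        have "h (\<ominus> a) \<otimes>\<^bsub>Q\<^esub> h (\<ominus> a) = h (\<ominus> a)"
          using m a by (simp add: Q.l_minus Q.r_minus)
        then obtain e where e: "e \<in> Idems R" "h (\<ominus> a) = h e \<or> h (\<ominus> a) = \<ominus>\<^bsub>Q\<^esub> h e"
          using L[of "\<ominus> a"] a by blast
        have "h a = \<ominus>\<^bsub>Q\<^esub> h e \<or> h a = h e" using e a Id
          by (metis H.hom_a_inv H.hom_closed Q.minus_minus)
        then show ?thesis using e by blast
      qed
      then obtain e where "e \<in> Idems R" "h a = h e \<or> h a = \<ominus>\<^bsub>Q\<^esub> h e" by blast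
      moreover have "central R e" using P3 calculation(1) unfolding abelian_ring_def by blast
      ultimately show "\<exists>e \<in> Idems R. central R e \<and> (a \<ominus> e \<in> I \<or> a \<oplus> e \<in> I)"
        using W a Id by blast
    qed
    then show ?P4 using P3 by blast
  qed
  have 41: "?P4 \<Longrightarrow> ?P1"
  proof -
    assume P4: ?P4
    show ?P1 unfolding uniquely_weakly_clean_def
    proof
      fix x assume x: "x \<in> carrier R"
      then obtain g where g: "g \<in> Idems R" "central R g" "x \<ominus> g \<in> I \<or> x \<oplus> g \<in> I" using P4 by blast
      have gc: "g \<in> carrier R" "g \<otimes> g = g" using g Id by auto
      have "\<And>e. e \<in> Idems R \<Longrightarrow> (x \<ominus> e \<in> I \<or> x \<oplus> e \<in> I) \<Longrightarrow> e = g"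
      proof -
        fix e assume e: "e \<in> Idems R" "x \<ominus> e \<in> I \<or> x \<oplus> e \<in> I"
        have ec: "e \<in> carrier R" "e \<otimes> e = e" using e Id by auto
        have 1: "h x = h e \<or> h x = \<ominus>\<^bsub>Q\<^esub> h e" using W x ec e by blast
        have 2: "h x = h g \<or> h x = \<ominus>\<^bsub>Q\<^esub> h g" using W x gc g by blast
        have "h e = h g \<or> h e = \<ominus>\<^bsub>Q\<^esub> h g" using 1 2 ec gc
          by (metis H.hom_closed Q.minus_minus)
        hence "e \<ominus> g \<in> I \<or> e \<oplus> g \<in> I" using W ec gc by blast
        then show "e = g" using uniq_aux[OF ec gc g(2) assms(2)] P4 by blast
      qed
      then show "\<exists>!e. e \<in> Idems R \<and> (x \<ominus> e \<in> I \<or> x \<oplus> e \<in> I)" using g by blast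
    qed
  qed
  show ?thesis using 12 23 34 41 by blast
qed

end
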